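(* Let $M$ be the statistical manifold of the beta-logistic distributions $$p(x;\theta^1,\theta^2)=\frac{2^{1-\theta^1}\operatorname{sech}^{\theta^1}(x)\,e^{\theta^2x}}{B\left(\frac{\theta^1-\theta^2}{2},\frac{\theta^1+\theta^2}{2}\right)},\qquad x\in\mathbb{R},\quad (\theta^1,\theta^2)\in\Theta=\{\theta^1\pm\theta^2>0\},$$ equipped with its Fisher information metric. Along a curve $t\mapsto(\theta^1(t),\theta^2(t))$ in $\Theta$, write $a=\frac{\theta^1-\theta^2}{2}$, $b=\frac{\theta^1+\theta^2}{2}$, $p=\psi'(a)$, $q=\psi'(b)$, $r=\psi'(\theta^1)$, $s=\psi''(a)$, $u=\psi''(b)$, $v=\psi''(\theta^1)$, and $\mathcal{G}=pq-r(p+q)$. Then the geodesic equations $\ddot\theta^k+\Gamma^k_{ij}\dot\theta^i\dot\theta^j=0$ ($k=1,2$) of $M$ are $$\ddot\theta^1-\frac{q(4v-s)+p(4v-u)}{8\mathcal{G}}(\dot\theta^1)^2+\frac{up-sq}{4\mathcal{G}}\dot\theta^1\dot\theta^2+\frac{sq+up}{8\mathcal{G}}(\dot\theta^2)^2=0,$$ $$\ddot\theta^2+\left(\frac{q(4v-s)}{8\mathcal{G}}+\frac{(s-u)r}{4\mathcal{G}}+\frac{(u-4v)p}{8\mathcal{G}}\right)(\dot\theta^1)^2+\frac{s(q-2r)+u(p-2r)}{4\mathcal{G}}\dot\theta^1\dot\theta^2+\frac{s(2r-q)+u(p-2r)}{8\mathcal{G}}(\dot\theta^2)^2=0.$$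
   Context: $B$ is the beta function, $\psi=\Gamma'/\Gamma$ the digamma function, $\psi',\psi''$ its derivatives; dots denote $d/dt$. With $l=\ln p$ and $\partial_i=\partial/\partial\theta^i$, the Fisher metric is $g_{ij}=\mathbb{E}[\partial_il\,\partial_jl]$, $(g^{ij})$ its inverse, $\Gamma_{ijk}=\frac12(\partial_ig_{jk}+\partial_jg_{ki}-\partial_kg_{ij})$ and $\Gamma^k_{ij}=\Gamma_{ijs}g^{sk}$ are the Levi-Civita connection coefficients (summation convention). *)

theory Defs
  imports "HOL-Analysis.Analysis"
begin

definition Theta :: "(real \<times> real) set" where
  "Theta = {(t1, t2). t1 - t2 > 0 \<and> t1 + t2 > 0}"

definition sech :: "real \<Rightarrow> real" where
  "sech x = 1 / cosh x"

definition blpdf :: "real \<Rightarrow> real \<Rightarrow> real \<Rightarrow> real" where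
  "blpdf x t1 t2 =
     2 powr (1 - t1) * (sech x) powr t1 * exp (t2 * x) / Beta ((t1 - t2) / 2) ((t1 + t2) / 2)"

definition dpart :: "nat \<Rightarrow> (real \<Rightarrow> real \<Rightarrow> real) \<Rightarrow> real \<Rightarrow> real \<Rightarrow> real" where
  "dpart i f t1 t2 = (if i = 1 then deriv (\<lambda>s. f s t2) t1 else deriv (\<lambda>s. f t1 s) t2)"

definition score :: "nat \<Rightarrow> real \<Rightarrow> real \<Rightarrow> real \<Rightarrow> real" where
  "score i x t1 t2 = dpart i (\<lambda>s1 s2. ln (blpdf x s1 s2)) t1 t2"

definition fisher :: "nat \<Rightarrow> nat \<Rightarrow> real \<Rightarrow> real \<Rightarrow> real" where
  "fisher i j t1 t2 = (LINT x|lborel. blpdf x t1 t2 * score i x t1 t2 * score j x t1 t2)"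

definition fisher_inv :: "nat \<Rightarrow> nat \<Rightarrow> real \<Rightarrow> real \<Rightarrow> real" where
  "fisher_inv i j t1 t2 =
     (let d = fisher 1 1 t1 t2 * fisher 2 2 t1 t2 - fisher 1 2 t1 t2 * fisher 2 1 t1 t2 in
      if i = 1 \<and> j = 1 then fisher 2 2 t1 t2 / d
      else if i = 2 \<and> j = 2 then fisher 1 1 t1 t2 / d
      else if i = 1 then - fisher 1 2 t1 t2 / d
      else - fisher 2 1 t1 t2 / d)"

definition christ1 :: "nat \<Rightarrow> nat \<Rightarrow> nat \<Rightarrow> real \<Rightarrow> real \<Rightarrow> real" where
  "christ1 i j k t1 t2 = (1/2) * (dpart i (fisher j k) t1 t2 + dpart j (fisher k i) t1 t2
                                  - dpart k (fisher i j) t1 t2)"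

definition christ2 :: "nat \<Rightarrow> nat \<Rightarrow> nat \<Rightarrow> real \<Rightarrow> real \<Rightarrow> real" where
  "christ2 k i j t1 t2 = (\<Sum>s\<in>{1,2}. christ1 i j s t1 t2 * fisher_inv s k t1 t2)"

end

theory Submission
  imports Defs
begin


definition W :: "real \<Rightarrow> real" where "W x = ln (exp x + exp (-x))"
definition F :: "real \<Rightarrow> real \<Rightarrow> real \<Rightarrow> real" where "F t1 t2 x = exp (t2 * x - t1 * W x)"

lemma W_ge_abs: "\<bar>x\<bar> \<le> W x"
proof -
  have "exp \<bar>x\<bar> \<le> exp x + exp (-x)" by (cases "x \<ge> 0") auto
  hence "ln (exp \<bar>x\<bar>) \<le> ln (exp x + exp (-x))" by (subst ln_le_cancel_iff) (auto simp: add_pos_pos)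
  thus ?thesis by (simp add: W_def)
qed

lemma W_nonneg: "0 \<le> W x" using W_ge_abs[of x] by linarith

definition gl :: "real \<Rightarrow> real" where "gl x = 1 / (1 + exp (-2*x))"

lemma gl_deriv: "(gl has_field_derivative (2 * exp (-2*x) / (1 + exp (-2*x))^2)) (at x within S)"
proof -
  have p: "1 + exp (-2*x) > 0" by (simp add: add_pos_pos)
  show ?thesis unfolding gl_def
    apply (rule derivative_eq_intros refl)+
    using p by (simp_all add: power2_eq_square field_simps)
qed

lemma gl_mono: "x < y \<Longrightarrow> gl x < gl y"
  unfolding gl_def by (simp add: add_pos_pos divide_strict_left_mono mult_pos_pos)

lemma gl_inj: "inj_on gl UNIV"
  by (metis gl_mono linorder_inj_onI' less_irrefl)

lemma gl_image: "gl ` UNIV = {0<..<1}"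
proof
  show "gl ` UNIV \<subseteq> {0<..<1}" unfolding gl_def by (auto simp: add_pos_pos)
next
  show "{0<..<1} \<subseteq> gl ` UNIV"
  proof
    fix y :: real assume y: "y \<in> {0<..<1}"
    define x where "x = ln (y / (1 - y)) / 2"
    have "exp (-2*x) = (1-y)/y" using y unfolding x_def
      by (simp add: exp_minus exp_ln)
    hence "1 + exp (-2*x) = 1 / y" using y by (simp add: field_simps)
    hence "gl x = y" using y unfolding gl_def by simp
    thus "y \<in> range gl" by (metis rangeI)
  qed
qed

lemma W_alt: "W x = x + ln (1 + exp (-2*x))"
proof -
  have "exp x + exp (-x) = exp x * (1 + exp (-2*x))"
    by (simp add: algebra_simps flip: exp_add)
  moreover have "1 + exp (-2*x) > 0" by (simp add: add_pos_pos)
  ultimately show ?thesis unfolding W_def by (simp add: ln_mult)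
qed

lemma cov_identity:
  "\<bar>2 * exp (-2*x) / (1 + exp (-2*x))^2\<bar> * (gl x powr (b - 1) * (1 - gl x) powr (a - 1))
     = 2 * F (a + b) (b - a) x"
proof -
  define e where "e = exp (-2*x)"
  define V where "V = ln (1 + e)"
  have e: "e > 0" unfolding e_def by simp
  have eV: "exp V = 1 + e" unfolding V_def using e by simp
  have g: "gl x = exp (- V)" unfolding gl_def e_def[symmetric] by (simp add: exp_minus eV divide_inverse)
  have g1: "1 - gl x = exp (-2*x - V)" 
  proof -
    have "1 - gl x = e / (1 + e)" unfolding gl_def e_def[symmetric] using e by (simp add: field_simps)
    also have "\<dots> = exp (-2*x) * exp (-V)" by (simp add: e_def exp_minus eV[unfolded e_def] divide_inverse)
    finally show ?thesis by (simp add: exp_add[symmetric])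
  qed
  have gp: "2 * exp (-2*x) / (1 + exp (-2*x))^2 = exp (ln 2 - 2*x - 2*V)"
  proof -
    have h: "ln 2 - 2*x - 2*V = (ln 2 + (-2*x)) - (V + V)" by simp
    have "exp (ln 2 - 2*x - 2*V) = 2 * e / (exp V * exp V)" unfolding e_def h
      by (simp only: exp_diff exp_add exp_ln[of 2])
    thus ?thesis unfolding eV e_def[symmetric] by (simp add: power2_eq_square)
  qed
  have "\<bar>2 * exp (-2*x) / (1 + exp (-2*x))^2\<bar> * (gl x powr (b - 1) * (1 - gl x) powr (a - 1))
     = exp (ln 2 - 2*x - 2*V) * (exp ((b-1) * (-V)) * exp ((a-1) * (-2*x - V)))"
    unfolding gp g1 unfolding g by (simp add: powr_def)
  also have "\<dots> = exp ((ln 2 - 2*x - 2*V) + ((b-1) * (-V) + (a-1) * (-2*x - V)))"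
    by (simp only: mult_exp_exp)
  also have "\<dots> = exp (ln 2 + ((b - a) * x - (a + b) * W x))"
    by (rule arg_cong[where f=exp]) (simp add: W_alt V_def e_def algebra_simps)
  finally show ?thesis unfolding F_def by (simp add: exp_add)
qed

lemma F_measurable[measurable]: "F t1 t2 \<in> borel_measurable borel"
  unfolding F_def W_def by measurable

lemma F_pos: "F t1 t2 x > 0" unfolding F_def by simp

lemma F_integral:
  assumes th: "(t1, t2) \<in> Theta"
  shows "integrable lborel (F t1 t2)"
    and "(\<integral>x. F t1 t2 x \<partial>lborel) = Beta ((t1 - t2) / 2) ((t1 + t2) / 2) / 2"
proof -
  define a where "a = (t1 - t2) / 2"
  define b where "b = (t1 + t2) / 2"
  have a: "a > 0" and b: "b > 0" using th unfolding Theta_def a_def b_def by auto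
  define f where "f y = y powr (b - 1) * (1 - y) powr (a - 1)" for y :: real
  have "(f has_integral Beta b a) {0..1}" unfolding f_def by (rule has_integral_Beta_real[OF b a])
  hence hi: "(f has_integral Beta b a) {0<..<1}"
    using has_integral_open_interval[of f "Beta b a" 0 1] by simp
  have fai: "f absolutely_integrable_on {0<..<1}"
    using hi by (subst absolutely_integrable_on_iff_nonneg) (auto simp: f_def)
  have fint: "integral {0<..<1} f = Beta b a" using hi by (rule integral_unique)
  have cv: "(\<lambda>x. \<bar>2 * exp (-2*x) / (1 + exp (-2*x))^2\<bar> * f (gl x)) absolutely_integrable_on UNIV \<and>
           integral UNIV (\<lambda>x. \<bar>2 * exp (-2*x) / (1 + exp (-2*x))^2\<bar> * f (gl x)) = Beta b a"
    by (rule has_absolute_integral_change_of_variables_1'[where S=UNIV and g=gl and g'="\<lambda>x. 2 * exp (-2*x) / (1 + exp (-2*x))^2" and f=f, THEN iffD2])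
       (auto intro: gl_deriv[of _ UNIV, simplified] gl_inj simp: gl_image fai fint)
  have eq: "(\<lambda>x. \<bar>2 * exp (-2*x) / (1 + exp (-2*x))^2\<bar> * f (gl x)) = (\<lambda>x. 2 * F t1 t2 x)"
  proof -
    have "a + b = t1" "b - a = t2" unfolding a_def b_def by (simp_all add: field_simps)
    thus ?thesis unfolding f_def cov_identity by simp
  qed
  have ai: "(\<lambda>x. 2 * F t1 t2 x) absolutely_integrable_on UNIV" and ii: "integral UNIV (\<lambda>x. 2 * F t1 t2 x) = Beta b a"
    using cv unfolding eq by auto
  have "integrable lebesgue (\<lambda>x. 2 * F t1 t2 x)" using ai by (simp add: set_integrable_def)
  hence i2: "integrable lborel (\<lambda>x. 2 * F t1 t2 x)" by (subst (asm) integrable_completion) auto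
  thus "integrable lborel (F t1 t2)" by simp
  have "(\<integral>x. 2 * F t1 t2 x \<partial>lborel) = Beta b a" using ii integral_lborel[OF i2] by simp
  thus "(\<integral>x. F t1 t2 x \<partial>lborel) = Beta ((t1 - t2) / 2) ((t1 + t2) / 2) / 2"
    by (simp add: a_def b_def Beta_commute)
qed



lemma diffquot_bound:
  fixes f f' :: "real \<Rightarrow> real"
  assumes "y \<in> ball t e" "y \<noteq> t"
    and der: "\<And>s. s \<in> ball t e \<Longrightarrow> (f has_real_derivative f' s) (at s)"
    and bnd: "\<And>s. s \<in> ball t e \<Longrightarrow> \<bar>f' s\<bar> \<le> B"
  shows "\<bar>(f y - f t) / (y - t)\<bar> \<le> B"
proof (cases "y < t")
  case True
  have "\<exists>z. y < z \<and> z < t \<and> f t - f y = (t - y) * f' z"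
    by (rule MVT2[OF True]) (use assms True in \<open>auto intro!: der simp: dist_real_def\<close>)
  then obtain z where z: "y < z" "z < t" "f t - f y = (t - y) * f' z" by blast
  have "z \<in> ball t e" using z assms(1) by (auto simp: dist_real_def)
  moreover have "(f y - f t) / (y - t) = f' z" using z True by (simp add: field_simps)
  ultimately show ?thesis using bnd by simp
next
  case False
  hence T: "t < y" using assms(2) by simp
  have "\<exists>z. t < z \<and> z < y \<and> f y - f t = (y - t) * f' z"
    by (rule MVT2[OF T]) (use assms T in \<open>auto intro!: der simp: dist_real_def\<close>)
  then obtain z where z: "t < z" "z < y" "f y - f t = (y - t) * f' z" by blast
  have "z \<in> ball t e" using z assms(1) by (auto simp: dist_real_def)
  moreover have "(f y - f t) / (y - t) = f' z" using z T by (simp add: field_simps)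
  ultimately show ?thesis using bnd by simp
qed

lemma deriv_integral:
  fixes f f' :: "real \<Rightarrow> real \<Rightarrow> real" and w :: "real \<Rightarrow> real"
  assumes e: "e > 0"
    and int: "\<And>s. s \<in> ball t e \<Longrightarrow> integrable lborel (f s)"
    and der: "\<And>s x. s \<in> ball t e \<Longrightarrow> ((\<lambda>s. f s x) has_real_derivative f' s x) (at s)"
    and bnd: "\<And>s x. s \<in> ball t e \<Longrightarrow> \<bar>f' s x\<bar> \<le> w x"
    and wint: "integrable lborel w"
    and meas: "f' t \<in> borel_measurable lborel"
  shows "((\<lambda>s. \<integral>x. f s x \<partial>lborel) has_real_derivative (\<integral>x. f' t x \<partial>lborel)) (at t)"
proof -
  have t: "t \<in> ball t e" using e by simp
  have "((\<lambda>s. ((\<integral>x. f s x \<partial>lborel) - (\<integral>x. f t x \<partial>lborel)) / (s - t)) \<longlongrightarrow> (\<integral>x. f' t x \<partial>lborel)) (at t within ball t e)"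
  proof (subst tendsto_at_iff_sequentially, intro allI impI)
    fix X :: "nat \<Rightarrow> real" assume X: "\<forall>i. X i \<in> ball t e - {t}" and lim: "X \<longlonglongrightarrow> t"
    define q where "q n x = (f (X n) x - f t x) / (X n - t)" for n x
    have eq: "((\<lambda>s. ((\<integral>x. f s x \<partial>lborel) - (\<integral>x. f t x \<partial>lborel)) / (s - t)) \<circ> X) n = (\<integral>x. q n x \<partial>lborel)" for n
      unfolding q_def o_def using int[of "X n"] int[OF t] X
      by (simp add: Bochner_Integration.integral_diff)
    have "(\<lambda>n. \<integral>x. q n x \<partial>lborel) \<longlonglongrightarrow> (\<integral>x. f' t x \<partial>lborel)"
    proof (rule integral_dominated_convergence[where w=w])
      show "f' t \<in> borel_measurable lborel" by (rule meas)
      show "q n \<in> borel_measurable lborel" for n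
        unfolding q_def using int[of "X n"] int[OF t] X by (auto intro!: borel_measurable_integrable)
      show "integrable lborel w" by (rule wint)
      show "AE x in lborel. (\<lambda>n. q n x) \<longlonglongrightarrow> f' t x"
      proof (rule AE_I2)
        fix x
        have "((\<lambda>y. (f y x - f t x) / (y - t)) \<longlongrightarrow> f' t x) (at t)"
          using der[OF t, of x] by (simp add: has_field_derivative_iff)
        moreover have "filterlim X (at t) sequentially"
          using X lim by (auto simp: filterlim_at)
        ultimately show "(\<lambda>n. q n x) \<longlonglongrightarrow> f' t x"
          unfolding q_def using filterlim_compose by blast
      qed
      show "AE x in lborel. norm (q n x) \<le> w x" for n
      proof (rule AE_I2)
        fix x
        show "norm (q n x) \<le> w x" unfolding q_def real_norm_def
          by (rule diffquot_bound[where f="\<lambda>s. f s x" and f'="\<lambda>s. f' s x" and e=e])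
             (use X in \<open>auto intro: der bnd\<close>)
      qed
    qed
    thus "((\<lambda>s. ((\<integral>x. f s x \<partial>lborel) - (\<integral>x. f t x \<partial>lborel)) / (s - t)) \<circ> X) \<longlonglongrightarrow> (\<integral>x. f' t x \<partial>lborel)"
      unfolding eq .
  qed
  hence "((\<lambda>s. \<integral>x. f s x \<partial>lborel) has_real_derivative (\<integral>x. f' t x \<partial>lborel)) (at t within ball t e)"
    by (simp add: has_field_derivative_iff)
  thus ?thesis using at_within_open[of t "ball t e"] t by simp
qed



lemma W_measurable[measurable]: "W \<in> borel_measurable borel"
  unfolding W_def by measurable

lemma pow_le_exp: assumes "(y::real) \<ge> 0" shows "y ^ n \<le> fact n * exp y"
proof -
  have "(\<lambda>n. y^n /\<^sub>R fact n) sums exp y" by (rule exp_converges)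
  hence s: "summable (\<lambda>n. y^n /\<^sub>R fact n)" and e: "exp y = (\<Sum>n. y^n /\<^sub>R fact n)"
    by (auto simp: sums_iff)
  have "sum (\<lambda>n. y^n /\<^sub>R fact n) {n} \<le> (\<Sum>n. y^n /\<^sub>R fact n)"
    by (rule sum_le_suminf[OF s]) (use assms in auto)
  hence "y ^ n / fact n \<le> exp y" using e by (simp add: divide_inverse mult.commute)
  thus ?thesis by (simp add: field_simps)
qed

lemma W_pow_bound:
  assumes "d > 0"
  shows "W x ^ n \<le> (fact n / d ^ n) * exp (d * W x)"
proof -
  have "(d * W x) ^ n \<le> fact n * exp (d * W x)"
    by (rule pow_le_exp) (use assms W_nonneg[of x] in simp)
  thus ?thesis using assms by (simp add: power_mult_distrib field_simps)
qed

lemma Theta_shift: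
  assumes "(t1, t2) \<in> Theta"
  shows "(t1 - (t1 - \<bar>t2\<bar>) / 2, t2) \<in> Theta" "(t1 - \<bar>t2\<bar>) / 2 > 0"
  using assms unfolding Theta_def by (auto split: abs_split simp: field_simps)

lemma integrable_poly:
  assumes th: "(t1, t2) \<in> Theta" and hm: "h \<in> borel_measurable borel"
    and hb: "\<And>x. \<bar>h x\<bar> \<le> W x ^ n"
  shows "integrable lborel (\<lambda>x. h x * F t1 t2 x)"
proof -
  define d where "d = (t1 - \<bar>t2\<bar>) / 2"
  have d: "d > 0" "(t1 - d, t2) \<in> Theta" using Theta_shift[OF th] unfolding d_def by auto
  define C where "C = fact n / d ^ n"
  have ib: "integrable lborel (\<lambda>x. C * F (t1 - d) t2 x)"
    using F_integral(1)[OF d(2)] by simp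
  show ?thesis
  proof (rule Bochner_Integration.integrable_bound[OF ib])
    show "(\<lambda>x. h x * F t1 t2 x) \<in> borel_measurable lborel" using hm by measurable
    show "AE x in lborel. norm (h x * F t1 t2 x) \<le> norm (C * F (t1 - d) t2 x)"
    proof (rule AE_I2)
      fix x
      have "norm (h x * F t1 t2 x) = \<bar>h x\<bar> * F t1 t2 x" using F_pos[of t1 t2 x] by (simp add: abs_mult)
      also have "\<dots> \<le> W x ^ n * F t1 t2 x" by (rule mult_right_mono[OF hb]) (use F_pos[of t1 t2 x] in simp)
      also have "\<dots> \<le> C * exp (d * W x) * F t1 t2 x"
        by (rule mult_right_mono) (use W_pow_bound[OF d(1), of x n] F_pos[of t1 t2 x] in \<open>simp_all add: C_def\<close>)
      also have "\<dots> = C * F (t1 - d) t2 x" unfolding F_def by (simp add: mult.assoc algebra_simps flip: exp_add)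
      also have "\<dots> = norm (C * F (t1 - d) t2 x)" using F_pos[of "t1-d" t2 x] d(1) by (simp add: C_def abs_mult)
      finally show "norm (h x * F t1 t2 x) \<le> norm (C * F (t1 - d) t2 x)" .
    qed
  qed
qed

lemma deriv_t1:
  assumes th: "(t1, t2) \<in> Theta" and hm: "h \<in> borel_measurable borel"
    and hb: "\<And>x. \<bar>h x\<bar> \<le> W x ^ n"
  shows "((\<lambda>s. \<integral>x. h x * F s t2 x \<partial>lborel) has_real_derivative
            (\<integral>x. (- W x * h x) * F t1 t2 x \<partial>lborel)) (at t1)"
proof -
  define d where "d = (t1 - \<bar>t2\<bar>) / 2"
  have d: "d > 0" "(t1 - d, t2) \<in> Theta" using Theta_shift[OF th] unfolding d_def by auto
  have ball: "(s, t2) \<in> Theta" if "s \<in> ball t1 d" for s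
    using that th unfolding Theta_def d_def by (auto simp: dist_real_def abs_if split: if_splits)
  show ?thesis
  proof (rule deriv_integral[where e=d and w="\<lambda>x. W x ^ Suc n * F (t1 - d) t2 x"])
    show "0 < d" by (rule d)
    show "integrable lborel (\<lambda>x. h x * F s t2 x)" if "s \<in> ball t1 d" for s
      by (rule integrable_poly[OF ball[OF that] hm hb])
    show "((\<lambda>s. h x * F s t2 x) has_real_derivative (- W x * h x) * F s t2 x) (at s)" for s x
      unfolding F_def by (auto intro!: derivative_eq_intros simp: algebra_simps)
    show "\<bar>(- W x * h x) * F s t2 x\<bar> \<le> W x ^ Suc n * F (t1 - d) t2 x" if "s \<in> ball t1 d" for s x
    proof -
      have s: "s > t1 - d" using that by (auto simp: dist_real_def)
      have "F s t2 x \<le> F (t1 - d) t2 x" unfolding F_def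
        using s W_nonneg[of x] by (simp add: mult_right_mono)
      moreover have "\<bar>(- W x * h x) * F s t2 x\<bar> = W x * \<bar>h x\<bar> * F s t2 x"
        using W_nonneg[of x] F_pos[of s t2 x] by (simp add: abs_mult)
      moreover have "W x * \<bar>h x\<bar> \<le> W x ^ Suc n"
        using hb[of x] W_nonneg[of x] by (simp add: mult_left_mono)
      ultimately show ?thesis using F_pos[of s t2 x] F_pos[of "t1-d" t2 x] W_nonneg[of x]
        by (metis (no_types, lifting) mult_mono less_imp_le zero_le_power)
    qed
    show "integrable lborel (\<lambda>x. W x ^ Suc n * F (t1 - d) t2 x)"
      by (rule integrable_poly[OF d(2), of _ "Suc n"]) (auto simp: W_nonneg)
    show "(\<lambda>x. (- W x * h x) * F t1 t2 x) \<in> borel_measurable lborel"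
      using hm by measurable
  qed
qed

lemma deriv_t2:
  assumes th: "(t1, t2) \<in> Theta" and hm: "h \<in> borel_measurable borel"
    and hb: "\<And>x. \<bar>h x\<bar> \<le> W x ^ n"
  shows "((\<lambda>s. \<integral>x. h x * F t1 s x \<partial>lborel) has_real_derivative
            (\<integral>x. (x * h x) * F t1 t2 x \<partial>lborel)) (at t2)"
proof -
  define d where "d = (t1 - \<bar>t2\<bar>) / 2"
  have d: "d > 0" "(t1 - d, t2) \<in> Theta" using Theta_shift[OF th] unfolding d_def by auto
  have ball: "(t1, s) \<in> Theta" if "s \<in> ball t2 d" for s
    using that th unfolding Theta_def d_def by (auto simp: dist_real_def abs_if split: if_splits)
  show ?thesis
  proof (rule deriv_integral[where e=d and w="\<lambda>x. W x ^ Suc n * F (t1 - d) t2 x"])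
    show "0 < d" by (rule d)
    show "integrable lborel (\<lambda>x. h x * F t1 s x)" if "s \<in> ball t2 d" for s
      by (rule integrable_poly[OF ball[OF that] hm hb])
    show "((\<lambda>s. h x * F t1 s x) has_real_derivative (x * h x) * F t1 s x) (at s)" for s x
      unfolding F_def by (auto intro!: derivative_eq_intros simp: algebra_simps)
    show "\<bar>(x * h x) * F t1 s x\<bar> \<le> W x ^ Suc n * F (t1 - d) t2 x" if "s \<in> ball t2 d" for s x
    proof -
      have s: "\<bar>s - t2\<bar> < d" using that by (auto simp: dist_real_def)
      have "s * x - t2 * x \<le> \<bar>s - t2\<bar> * \<bar>x\<bar>"
        by (metis abs_ge_self abs_mult left_diff_distrib)
      also have "\<dots> \<le> d * W x" using s W_ge_abs[of x]
        by (intro mult_mono) auto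
      finally have "s * x - t1 * W x \<le> t2 * x - (t1 - d) * W x" by (simp add: algebra_simps)
      hence "F t1 s x \<le> F (t1 - d) t2 x" unfolding F_def by simp
      moreover have "\<bar>(x * h x) * F t1 s x\<bar> = \<bar>x\<bar> * \<bar>h x\<bar> * F t1 s x"
        using F_pos[of t1 s x] by (simp add: abs_mult)
      moreover have "\<bar>x\<bar> * \<bar>h x\<bar> \<le> W x ^ Suc n"
        using hb[of x] W_ge_abs[of x] by (simp add: mult_mono)
      ultimately show ?thesis using F_pos[of t1 s x] F_pos[of "t1-d" t2 x] W_nonneg[of x]
        by (metis (no_types, lifting) mult_mono less_imp_le zero_le_power)
    qed
    show "integrable lborel (\<lambda>x. W x ^ Suc n * F (t1 - d) t2 x)"
      by (rule integrable_poly[OF d(2), of _ "Suc n"]) (auto simp: W_nonneg)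
    show "(\<lambda>x. (x * h x) * F t1 t2 x) \<in> borel_measurable lborel"
      using hm by measurable
  qed
qed



definition lnB where "lnB t1 t2 = ln_Gamma ((t1-t2)/2) + ln_Gamma ((t1+t2)/2) - ln_Gamma (t1::real)"
definition Zc where "Zc t1 t2 = exp (lnB t1 t2) / 2"
definition m1 where "m1 t1 t2 = (Digamma ((t1-t2)/2) + Digamma ((t1+t2)/2)) / 2 - Digamma (t1::real)"
definition m2 where "m2 t1 t2 = (Digamma ((t1+t2)/2) - Digamma ((t1-t2)/2)) / (2::real)"
definition H11 where "H11 t1 t2 = (Polygamma 1 ((t1-t2)/2) + Polygamma 1 ((t1+t2)/2)) / 4 - Polygamma 1 (t1::real)"
definition H12 where "H12 t1 t2 = (Polygamma 1 ((t1+t2)/2) - Polygamma 1 ((t1-t2)/2)) / (4::real)"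
definition H22 where "H22 t1 t2 = (Polygamma 1 ((t1-t2)/2) + Polygamma 1 ((t1+t2)/2)) / (4::real)"

lemma pos_notin_nonpos_Ints: "(x::real) > 0 \<Longrightarrow> x \<notin> \<int>\<^sub>\<le>\<^sub>0"
  by (auto dest: nonpos_Ints_nonpos)

lemma Theta_pos: "(t1, t2) \<in> Theta \<Longrightarrow> (t1 - t2) / 2 > 0 \<and> (t1 + t2) / 2 > 0 \<and> t1 > 0"
  unfolding Theta_def by auto

lemma Beta_eq: "(t1, t2) \<in> Theta \<Longrightarrow> Beta ((t1-t2)/2) ((t1+t2)/2) = exp (lnB t1 t2)"
proof -
  assume th: "(t1, t2) \<in> Theta"
  have e: "(t1-t2)/2 + (t1+t2)/2 = t1" by (simp add: field_simps)
  show ?thesis using Theta_pos[OF th] unfolding Beta_def e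
    by (simp add: lnB_def Gamma_real_pos_exp exp_add exp_diff)
qed

lemma Theta_nhds1: "(t1, t2) \<in> Theta \<Longrightarrow> eventually (\<lambda>s. (s, t2) \<in> Theta) (nhds t1)"
proof -
  assume th: "(t1, t2) \<in> Theta"
  define d where "d = (t1 - \<bar>t2\<bar>) / 2"
  have "d > 0" using th unfolding d_def Theta_def by (auto simp: abs_if)
  moreover have "\<forall>s. dist s t1 < d \<longrightarrow> (s, t2) \<in> Theta"
    using th unfolding Theta_def d_def by (auto simp: dist_real_def abs_if split: if_splits)
  ultimately show ?thesis unfolding eventually_nhds_metric by blast
qed

lemma Theta_nhds2: "(t1, t2) \<in> Theta \<Longrightarrow> eventually (\<lambda>s. (t1, s) \<in> Theta) (nhds t2)"
proof -
  assume th: "(t1, t2) \<in> Theta"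
  define d where "d = (t1 - \<bar>t2\<bar>) / 2"
  have "d > 0" using th unfolding d_def Theta_def by (auto simp: abs_if)
  moreover have "\<forall>s. dist s t2 < d \<longrightarrow> (t1, s) \<in> Theta"
    using th unfolding Theta_def d_def by (auto simp: dist_real_def abs_if split: if_splits)
  ultimately show ?thesis unfolding eventually_nhds_metric by blast
qed

lemma deriv_match:
  assumes "(f has_real_derivative D) (at x)" "(g has_real_derivative D') (at x)"
    and "eventually (\<lambda>s. f s = g s) (nhds x)"
  shows "D = D'"
proof -
  have "(g has_real_derivative D) (at x)"
    using assms(1) DERIV_cong_ev[OF refl assms(3) refl] by simp
  thus ?thesis using assms(2) DERIV_unique by blast
qed

lemma Zc_d1: "(t1, t2) \<in> Theta \<Longrightarrow> ((\<lambda>s. Zc s t2) has_real_derivative Zc t1 t2 * m1 t1 t2) (at t1)"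
  unfolding Zc_def lnB_def m1_def using Theta_pos[of t1 t2]
  by (auto intro!: derivative_eq_intros simp: field_simps)

lemma Zc_d2: "(t1, t2) \<in> Theta \<Longrightarrow> ((\<lambda>s. Zc t1 s) has_real_derivative Zc t1 t2 * m2 t1 t2) (at t2)"
  unfolding Zc_def lnB_def m2_def using Theta_pos[of t1 t2]
  by (auto intro!: derivative_eq_intros simp: field_simps)

lemma m1_d1: "(t1, t2) \<in> Theta \<Longrightarrow> ((\<lambda>s. m1 s t2) has_real_derivative H11 t1 t2) (at t1)"
  unfolding H11_def m1_def using Theta_pos[of t1 t2]
  by (auto intro!: derivative_eq_intros pos_notin_nonpos_Ints simp: field_simps)

lemma m1_d2: "(t1, t2) \<in> Theta \<Longrightarrow> ((\<lambda>s. m1 t1 s) has_real_derivative H12 t1 t2) (at t2)"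
  unfolding H12_def m1_def using Theta_pos[of t1 t2]
  by (auto intro!: derivative_eq_intros pos_notin_nonpos_Ints simp: field_simps)

lemma m2_d2: "(t1, t2) \<in> Theta \<Longrightarrow> ((\<lambda>s. m2 t1 s) has_real_derivative H22 t1 t2) (at t2)"
  unfolding H22_def m2_def using Theta_pos[of t1 t2]
  by (auto intro!: derivative_eq_intros pos_notin_nonpos_Ints simp: field_simps)



lemma E0: "(t1, t2) \<in> Theta \<Longrightarrow> (\<integral>x. F t1 t2 x \<partial>lborel) = Zc t1 t2"
  using F_integral(2)[of t1 t2] Beta_eq[of t1 t2] by (simp add: Zc_def)

lemma E1: assumes th: "(t1, t2) \<in> Theta"
  shows "(\<integral>x. W x * F t1 t2 x \<partial>lborel) = - (Zc t1 t2 * m1 t1 t2)"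
proof -
  have d: "((\<lambda>s. \<integral>x. F s t2 x \<partial>lborel) has_real_derivative (\<integral>x. - (W x * F t1 t2 x) \<partial>lborel)) (at t1)"
    using deriv_t1[OF th, of "\<lambda>x. 1" 0] by simp
  have ev: "eventually (\<lambda>s. (\<integral>x. F s t2 x \<partial>lborel) = Zc s t2) (nhds t1)"
    using Theta_nhds1[OF th] by eventually_elim (rule E0)
  have "(\<integral>x. - (W x * F t1 t2 x) \<partial>lborel) = Zc t1 t2 * m1 t1 t2"
    by (rule deriv_match[OF d Zc_d1[OF th] ev])
  thus ?thesis by simp
qed

lemma E2: assumes th: "(t1, t2) \<in> Theta"
  shows "(\<integral>x. x * F t1 t2 x \<partial>lborel) = Zc t1 t2 * m2 t1 t2"
proof -
  have d: "((\<lambda>s. \<integral>x. F t1 s x \<partial>lborel) has_real_derivative (\<integral>x. x * F t1 t2 x \<partial>lborel)) (at t2)"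
    using deriv_t2[OF th, of "\<lambda>x. 1" 0] by simp
  have ev: "eventually (\<lambda>s. (\<integral>x. F t1 s x \<partial>lborel) = Zc t1 s) (nhds t2)"
    using Theta_nhds2[OF th] by eventually_elim (rule E0)
  show ?thesis by (rule deriv_match[OF d Zc_d2[OF th] ev])
qed

lemma W_abs_le: "\<bar>W x\<bar> \<le> W x ^ 1" using W_nonneg[of x] by simp
lemma x_abs_le: "\<bar>x\<bar> \<le> W x ^ 1" using W_ge_abs[of x] by simp

lemma E11: assumes th: "(t1, t2) \<in> Theta"
  shows "(\<integral>x. W x * W x * F t1 t2 x \<partial>lborel) = Zc t1 t2 * (m1 t1 t2 * m1 t1 t2 + H11 t1 t2)"
proof -
  have d: "((\<lambda>s. \<integral>x. W x * F s t2 x \<partial>lborel) has_real_derivative (\<integral>x. - (W x * W x * F t1 t2 x) \<partial>lborel)) (at t1)"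
    using deriv_t1[OF th, of W 1] W_abs_le by simp
  have ev: "eventually (\<lambda>s. (\<integral>x. W x * F s t2 x \<partial>lborel) = - (Zc s t2 * m1 s t2)) (nhds t1)"
    using Theta_nhds1[OF th] by eventually_elim (rule E1)
  have d2: "((\<lambda>s. - (Zc s t2 * m1 s t2)) has_real_derivative - (Zc t1 t2 * m1 t1 t2 * m1 t1 t2 + Zc t1 t2 * H11 t1 t2)) (at t1)"
    by (auto intro!: derivative_eq_intros Zc_d1[OF th] m1_d1[OF th] simp: algebra_simps)
  have "(\<integral>x. - (W x * W x * F t1 t2 x) \<partial>lborel) = - (Zc t1 t2 * m1 t1 t2 * m1 t1 t2 + Zc t1 t2 * H11 t1 t2)"
    by (rule deriv_match[OF d d2 ev])
  thus ?thesis by (simp add: algebra_simps)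
qed

lemma E12: assumes th: "(t1, t2) \<in> Theta"
  shows "(\<integral>x. x * W x * F t1 t2 x \<partial>lborel) = - (Zc t1 t2 * (m1 t1 t2 * m2 t1 t2 + H12 t1 t2))"
proof -
  have d: "((\<lambda>s. \<integral>x. W x * F t1 s x \<partial>lborel) has_real_derivative (\<integral>x. x * W x * F t1 t2 x \<partial>lborel)) (at t2)"
    using deriv_t2[OF th, of W 1] W_abs_le by simp
  have ev: "eventually (\<lambda>s. (\<integral>x. W x * F t1 s x \<partial>lborel) = - (Zc t1 s * m1 t1 s)) (nhds t2)"
    using Theta_nhds2[OF th] by eventually_elim (rule E1)
  have d2: "((\<lambda>s. - (Zc t1 s * m1 t1 s)) has_real_derivative - (Zc t1 t2 * (m1 t1 t2 * m2 t1 t2 + H12 t1 t2))) (at t2)"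
    by (auto intro!: derivative_eq_intros Zc_d2[OF th] m1_d2[OF th] simp: algebra_simps)
  show ?thesis by (rule deriv_match[OF d d2 ev])
qed

lemma E22: assumes th: "(t1, t2) \<in> Theta"
  shows "(\<integral>x. x * x * F t1 t2 x \<partial>lborel) = Zc t1 t2 * (m2 t1 t2 * m2 t1 t2 + H22 t1 t2)"
proof -
  have d: "((\<lambda>s. \<integral>x. x * F t1 s x \<partial>lborel) has_real_derivative (\<integral>x. x * x * F t1 t2 x \<partial>lborel)) (at t2)"
    using deriv_t2[OF th, of "\<lambda>x. x" 1] x_abs_le by simp
  have ev: "eventually (\<lambda>s. (\<integral>x. x * F t1 s x \<partial>lborel) = Zc t1 s * m2 t1 s) (nhds t2)"
    using Theta_nhds2[OF th] by eventually_elim (rule E2)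
  have d2: "((\<lambda>s. Zc t1 s * m2 t1 s) has_real_derivative Zc t1 t2 * (m2 t1 t2 * m2 t1 t2 + H22 t1 t2)) (at t2)"
    by (auto intro!: derivative_eq_intros Zc_d2[OF th] m2_d2[OF th] simp: algebra_simps)
  show ?thesis by (rule deriv_match[OF d d2 ev])
qed



lemma Zc_pos: "Zc t1 t2 > 0" unfolding Zc_def by simp

lemma sech_eq: "sech x = 2 / exp (W x)"
proof -
  have p: "exp x + exp (-x) > 0" by (simp add: add_pos_pos)
  show ?thesis unfolding sech_def W_def using p by (simp add: cosh_def)
qed

lemma blpdf_eq: assumes th: "(t1, t2) \<in> Theta"
  shows "blpdf x t1 t2 = exp (ln 2 + t2 * x - t1 * W x - lnB t1 t2)"
proof -
  have "2 powr (1 - t1) * sech x powr t1 * exp (t2 * x)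
        = exp ((1 - t1) * ln 2) * exp (t1 * (ln 2 - W x)) * exp (t2 * x)"
    unfolding sech_eq by (simp add: powr_def ln_div)
  also have "\<dots> = exp (ln 2 + t2 * x - t1 * W x)"
    by (simp add: mult_exp_exp algebra_simps)
  finally show ?thesis unfolding blpdf_def Beta_eq[OF th] by (simp add: exp_diff)
qed

lemma blpdf_F: assumes th: "(t1, t2) \<in> Theta"
  shows "blpdf x t1 t2 = F t1 t2 x / Zc t1 t2"
  unfolding blpdf_eq[OF th] F_def Zc_def
  by (simp add: exp_diff exp_add)

lemma ln_blpdf: assumes th: "(t1, t2) \<in> Theta"
  shows "ln (blpdf x t1 t2) = ln 2 + t2 * x - t1 * W x - lnB t1 t2"
  unfolding blpdf_eq[OF th] by simp

lemma lnB_d1: "(t1, t2) \<in> Theta \<Longrightarrow> ((\<lambda>s. lnB s t2) has_real_derivative m1 t1 t2) (at t1)"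
  unfolding lnB_def m1_def using Theta_pos[of t1 t2]
  by (auto intro!: derivative_eq_intros simp: field_simps)

lemma lnB_d2: "(t1, t2) \<in> Theta \<Longrightarrow> ((\<lambda>s. lnB t1 s) has_real_derivative m2 t1 t2) (at t2)"
  unfolding lnB_def m2_def using Theta_pos[of t1 t2]
  by (auto intro!: derivative_eq_intros simp: field_simps)

lemma score1: assumes th: "(t1, t2) \<in> Theta"
  shows "score 1 x t1 t2 = - W x - m1 t1 t2"
proof -
  have d: "((\<lambda>s. ln 2 + t2 * x - s * W x - lnB s t2) has_real_derivative - W x - m1 t1 t2) (at t1)"
    by (auto intro!: derivative_eq_intros lnB_d1[OF th])
  have ev: "eventually (\<lambda>s. ln (blpdf x s t2) = ln 2 + t2 * x - s * W x - lnB s t2) (nhds t1)"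
    using Theta_nhds1[OF th] by eventually_elim (rule ln_blpdf)
  have "((\<lambda>s. ln (blpdf x s t2)) has_real_derivative - W x - m1 t1 t2) (at t1)"
    using d DERIV_cong_ev[OF refl ev refl] by simp
  thus ?thesis unfolding score_def dpart_def by (simp add: DERIV_imp_deriv)
qed

lemma score2: assumes th: "(t1, t2) \<in> Theta"
  shows "score 2 x t1 t2 = x - m2 t1 t2"
proof -
  have d: "((\<lambda>s. ln 2 + s * x - t1 * W x - lnB t1 s) has_real_derivative x - m2 t1 t2) (at t2)"
    by (auto intro!: derivative_eq_intros lnB_d2[OF th])
  have ev: "eventually (\<lambda>s. ln (blpdf x t1 s) = ln 2 + s * x - t1 * W x - lnB t1 s) (nhds t2)"
    using Theta_nhds2[OF th] by eventually_elim (rule ln_blpdf)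
  have "((\<lambda>s. ln (blpdf x t1 s)) has_real_derivative x - m2 t1 t2) (at t2)"
    using d DERIV_cong_ev[OF refl ev refl] by simp
  thus ?thesis unfolding score_def dpart_def by (simp add: DERIV_imp_deriv)
qed

lemma int_lin3:
  fixes f g h :: "real \<Rightarrow> real"
  assumes "integrable lborel f" "integrable lborel g" "integrable lborel h"
  shows "(\<integral>x. a * f x + b * g x + c * h x \<partial>lborel)
          = a * (\<integral>x. f x \<partial>lborel) + b * (\<integral>x. g x \<partial>lborel) + c * (\<integral>x. h x \<partial>lborel)"
  using assms by simp

lemma int_lin4:
  fixes f g h k :: "real \<Rightarrow> real"
  assumes "integrable lborel f" "integrable lborel g" "integrable lborel h" "integrable lborel k"
  shows "(\<integral>x. a * f x + b * g x + c * h x + d * k x \<partial>lborel)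
          = a * (\<integral>x. f x \<partial>lborel) + b * (\<integral>x. g x \<partial>lborel) + c * (\<integral>x. h x \<partial>lborel) + d * (\<integral>x. k x \<partial>lborel)"
  using assms by simp

lemma WW_abs_le: "\<bar>W x * W x\<bar> \<le> W x ^ 2" using W_nonneg[of x] by (simp add: power2_eq_square)
lemma xW_abs_le: "\<bar>x * W x\<bar> \<le> W x ^ 2"
  using W_nonneg[of x] W_ge_abs[of x] by (simp add: power2_eq_square abs_mult mult_right_mono)
lemma xx_abs_le: "\<bar>x * x\<bar> \<le> W x ^ 2"
proof -
  have "\<bar>x\<bar> * \<bar>x\<bar> \<le> W x * W x" using W_ge_abs[of x] by (intro mult_mono) auto
  thus ?thesis by (simp add: power2_eq_square abs_mult)
qed

lemma ints: assumes th: "(t1, t2) \<in> Theta"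
  shows "integrable lborel (\<lambda>x. F t1 t2 x)"
    "integrable lborel (\<lambda>x. W x * F t1 t2 x)"
    "integrable lborel (\<lambda>x. x * F t1 t2 x)"
    "integrable lborel (\<lambda>x. W x * W x * F t1 t2 x)"
    "integrable lborel (\<lambda>x. x * W x * F t1 t2 x)"
    "integrable lborel (\<lambda>x. x * x * F t1 t2 x)"
  using integrable_poly[OF th, of "\<lambda>x. 1" 0]
    integrable_poly[OF th, of W 1, OF _ W_abs_le]
    integrable_poly[OF th, of "\<lambda>x. x" 1, OF _ x_abs_le]
    integrable_poly[OF th, of "\<lambda>x. W x * W x" 2, OF _ WW_abs_le]
    integrable_poly[OF th, of "\<lambda>x. x * W x" 2, OF _ xW_abs_le]
    integrable_poly[OF th, of "\<lambda>x. x * x" 2, OF _ xx_abs_le]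
  by (simp_all add: mult.assoc)

lemma fisher11: assumes th: "(t1, t2) \<in> Theta" shows "fisher 1 1 t1 t2 = H11 t1 t2"
proof -
  let ?Z = "Zc t1 t2" and ?m = "m1 t1 t2"
  have "fisher 1 1 t1 t2 = (\<integral>x. (1/?Z) * (W x * W x * F t1 t2 x) + (2 * ?m / ?Z) * (W x * F t1 t2 x)
                              + (?m * ?m / ?Z) * F t1 t2 x \<partial>lborel)"
    unfolding fisher_def score1[OF th] blpdf_F[OF th]
    using Zc_pos[of t1 t2] by (intro Bochner_Integration.integral_cong) (auto simp: field_simps)
  also have "\<dots> = H11 t1 t2"
    apply (subst int_lin3) using ints[OF th] E0[OF th] E1[OF th] E11[OF th] Zc_pos[of t1 t2]
    by (auto simp: field_simps)
  finally show ?thesis .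
qed

lemma fisher12: assumes th: "(t1, t2) \<in> Theta" shows "fisher 1 2 t1 t2 = H12 t1 t2"
proof -
  let ?Z = "Zc t1 t2" and ?m = "m1 t1 t2" and ?n = "m2 t1 t2"
  have "fisher 1 2 t1 t2 = (\<integral>x. (-1/?Z) * (x * W x * F t1 t2 x) + (?n / ?Z) * (W x * F t1 t2 x)
                              + (- ?m / ?Z) * (x * F t1 t2 x) + (?m * ?n / ?Z) * F t1 t2 x \<partial>lborel)"
    unfolding fisher_def score1[OF th] score2[OF th] blpdf_F[OF th]
    using Zc_pos[of t1 t2] by (intro Bochner_Integration.integral_cong) (auto simp: field_simps)
  also have "\<dots> = H12 t1 t2"
    apply (subst int_lin4) using ints[OF th] E0[OF th] E1[OF th] E2[OF th] E12[OF th] Zc_pos[of t1 t2]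
    by (auto simp: field_simps)
  finally show ?thesis .
qed

lemma fisher21: "fisher 2 1 t1 t2 = fisher 1 2 t1 t2"
  unfolding fisher_def by (simp add: mult_ac)

lemma fisher22: assumes th: "(t1, t2) \<in> Theta" shows "fisher 2 2 t1 t2 = H22 t1 t2"
proof -
  let ?Z = "Zc t1 t2" and ?n = "m2 t1 t2"
  have "fisher 2 2 t1 t2 = (\<integral>x. (1/?Z) * (x * x * F t1 t2 x) + (- 2 * ?n / ?Z) * (x * F t1 t2 x)
                              + (?n * ?n / ?Z) * F t1 t2 x \<partial>lborel)"
    unfolding fisher_def score2[OF th] blpdf_F[OF th]
    using Zc_pos[of t1 t2] by (intro Bochner_Integration.integral_cong) (auto simp: field_simps)
  also have "\<dots> = H22 t1 t2"
    apply (subst int_lin3) using ints[OF th] E0[OF th] E2[OF th] E22[OF th] Zc_pos[of t1 t2]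
    by (auto simp: field_simps)
  finally show ?thesis .
qed



lemma dpart1_eq:
  assumes th: "(t1, t2) \<in> Theta" and eq: "\<And>s1 s2. (s1, s2) \<in> Theta \<Longrightarrow> f s1 s2 = g s1 s2"
    and d: "((\<lambda>s. g s t2) has_real_derivative D) (at t1)"
  shows "dpart 1 f t1 t2 = D"
proof -
  have ev: "eventually (\<lambda>s. f s t2 = g s t2) (nhds t1)"
    using Theta_nhds1[OF th] by eventually_elim (rule eq)
  have "((\<lambda>s. f s t2) has_real_derivative D) (at t1)"
    using d DERIV_cong_ev[OF refl ev refl] by simp
  thus ?thesis unfolding dpart_def by (simp add: DERIV_imp_deriv)
qed

lemma dpart2_eq:
  assumes th: "(t1, t2) \<in> Theta" and eq: "\<And>s1 s2. (s1, s2) \<in> Theta \<Longrightarrow> f s1 s2 = g s1 s2"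
    and d: "((\<lambda>s. g t1 s) has_real_derivative D) (at t2)"
  shows "dpart 2 f t1 t2 = D"
proof -
  have ev: "eventually (\<lambda>s. f t1 s = g t1 s) (nhds t2)"
    using Theta_nhds2[OF th] by eventually_elim (rule eq)
  have "((\<lambda>s. f t1 s) has_real_derivative D) (at t2)"
    using d DERIV_cong_ev[OF refl ev refl] by simp
  thus ?thesis unfolding dpart_def by (simp add: DERIV_imp_deriv)
qed

lemma fisher21_fun: "fisher 2 1 = fisher 1 2"
  by (intro ext) (rule fisher21)

context
  fixes t1 t2 :: real
  assumes th: "(t1, t2) \<in> Theta"
begin

lemma pos: "(t1 - t2) / 2 > 0" "(t1 + t2) / 2 > 0" "t1 > 0"
  using Theta_pos[OF th] by auto

lemma dH11_1: "dpart 1 (fisher 1 1) t1 t2 = (Polygamma 2 ((t1-t2)/2) + Polygamma 2 ((t1+t2)/2)) / 8 - Polygamma 2 t1"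
  by (rule dpart1_eq[OF th fisher11]) (use pos in \<open>auto intro!: derivative_eq_intros pos_notin_nonpos_Ints simp: H11_def field_simps numeral_2_eq_2\<close>)

lemma dH11_2: "dpart 2 (fisher 1 1) t1 t2 = (Polygamma 2 ((t1+t2)/2) - Polygamma 2 ((t1-t2)/2)) / 8"
  by (rule dpart2_eq[OF th fisher11]) (use pos in \<open>auto intro!: derivative_eq_intros pos_notin_nonpos_Ints simp: H11_def field_simps numeral_2_eq_2\<close>)

lemma dH12_1: "dpart 1 (fisher 1 2) t1 t2 = (Polygamma 2 ((t1+t2)/2) - Polygamma 2 ((t1-t2)/2)) / 8"
  by (rule dpart1_eq[OF th fisher12]) (use pos in \<open>auto intro!: derivative_eq_intros pos_notin_nonpos_Ints simp: H12_def field_simps numeral_2_eq_2\<close>)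

lemma dH12_2: "dpart 2 (fisher 1 2) t1 t2 = (Polygamma 2 ((t1+t2)/2) + Polygamma 2 ((t1-t2)/2)) / 8"
  by (rule dpart2_eq[OF th fisher12]) (use pos in \<open>auto intro!: derivative_eq_intros pos_notin_nonpos_Ints simp: H12_def field_simps numeral_2_eq_2\<close>)

lemma dH22_1: "dpart 1 (fisher 2 2) t1 t2 = (Polygamma 2 ((t1-t2)/2) + Polygamma 2 ((t1+t2)/2)) / 8"
  by (rule dpart1_eq[OF th fisher22]) (use pos in \<open>auto intro!: derivative_eq_intros pos_notin_nonpos_Ints simp: H22_def field_simps numeral_2_eq_2\<close>)

lemma dH22_2: "dpart 2 (fisher 2 2) t1 t2 = (Polygamma 2 ((t1+t2)/2) - Polygamma 2 ((t1-t2)/2)) / 8"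
  by (rule dpart2_eq[OF th fisher22]) (use pos in \<open>auto intro!: derivative_eq_intros pos_notin_nonpos_Ints simp: H22_def field_simps numeral_2_eq_2\<close>)

end



lemma sum_two: "(\<Sum>i\<in>{1::nat,2}. f i) = f 1 + f 2" by simp

lemma geo_final:
  fixes t1 t2 x y X Y :: real
  assumes th: "(t1, t2) \<in> Theta"
  shows "let a = (t1 - t2) / 2; b = (t1 + t2) / 2;
             p = Polygamma 1 a; q = Polygamma 1 b; r = Polygamma 1 t1;
             s = Polygamma 2 a; u = Polygamma 2 b; v = Polygamma 2 t1;
             G = p * q - r * (p + q);
             dth = (\<lambda>i::nat. if i = 1 then x else y)
         in (X + (\<Sum>i\<in>{1,2}. \<Sum>j\<in>{1,2}. christ2 1 i j t1 t2 * dth i * dth j)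
               = X - (q * (4 * v - s) + p * (4 * v - u)) / (8 * G) * x\<^sup>2
                 + (u * p - s * q) / (4 * G) * x * y
                 + (s * q + u * p) / (8 * G) * y\<^sup>2)
          \<and> (Y + (\<Sum>i\<in>{1,2}. \<Sum>j\<in>{1,2}. christ2 2 i j t1 t2 * dth i * dth j)
               = Y + (q * (4 * v - s) / (8 * G) + (s - u) * r / (4 * G)
                          + (u - 4 * v) * p / (8 * G)) * x\<^sup>2
                 + (s * (q - 2 * r) + u * (p - 2 * r)) / (4 * G) * x * y
                 + (s * (2 * r - q) + u * (p - 2 * r)) / (8 * G) * y\<^sup>2)"
proof -
  define p :: real where "p = Polygamma 1 ((t1 - t2) / 2)"
  define q where "q = Polygamma 1 ((t1 + t2) / 2)"
  define r where "r = Polygamma 1 t1"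
  define s where "s = Polygamma 2 ((t1 - t2) / 2)"
  define u where "u = Polygamma 2 ((t1 + t2) / 2)"
  define v where "v = Polygamma 2 t1"
  define G where "G = p * q - r * (p + q)"
  have f11: "fisher 1 1 t1 t2 = (p + q) / 4 - r" using fisher11[OF th] by (simp add: H11_def p_def q_def r_def)
  have f12: "fisher 1 2 t1 t2 = (q - p) / 4" using fisher12[OF th] by (simp add: H12_def p_def q_def)
  have f21: "fisher 2 1 t1 t2 = (q - p) / 4" using f12 fisher21 by simp
  have f22: "fisher 2 2 t1 t2 = (p + q) / 4" using fisher22[OF th] by (simp add: H22_def p_def q_def)
  have d111: "dpart 1 (fisher 1 1) t1 t2 = (s + u) / 8 - v" using dH11_1[OF th] by (simp add: s_def u_def v_def)
  have d211: "dpart 2 (fisher 1 1) t1 t2 = (u - s) / 8" using dH11_2[OF th] by (simp add: s_def u_def)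
  have d112: "dpart 1 (fisher 1 2) t1 t2 = (u - s) / 8" using dH12_1[OF th] by (simp add: s_def u_def)
  have d212: "dpart 2 (fisher 1 2) t1 t2 = (u + s) / 8" using dH12_2[OF th] by (simp add: s_def u_def)
  have d122: "dpart 1 (fisher 2 2) t1 t2 = (s + u) / 8" using dH22_1[OF th] by (simp add: s_def u_def)
  have d222: "dpart 2 (fisher 2 2) t1 t2 = (u - s) / 8" using dH22_2[OF th] by (simp add: s_def u_def)
  have detG: "((p + q) / 4 - r) * ((p + q) / 4) - (q - p) / 4 * ((q - p) / 4) = G / 4"
    unfolding G_def by (simp add: field_simps)
  show ?thesis
    unfolding Let_def p_def[symmetric] q_def[symmetric] r_def[symmetric] s_def[symmetric]
      u_def[symmetric] v_def[symmetric] G_def[symmetric]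
    unfolding christ2_def christ1_def fisher_inv_def fisher21_fun Let_def
    apply (simp only: sum_two)
    apply (simp only: fisher21_fun f11 f12 f22 d111 d211 d112 d212 d122 d222)
    apply (simp only: detG)
    apply (cases "G = 0")
     apply simp
    apply (rule conjI)
     apply (simp add: divide_simps)
     apply (simp add: G_def algebra_simps power2_eq_square)
    apply (simp add: divide_simps)
    apply (simp add: G_def algebra_simps power2_eq_square)
    done
qed


theorem mainTheorem4:
  fixes T :: "real set" and t :: real
    and th1 th2 dth1 dth2 :: "real \<Rightarrow> real" and ddth1 ddth2 :: real
  assumes "open T" and "t \<in> T"
    and "\<forall>s\<in>T. (th1 s, th2 s) \<in> Theta"
    and "\<forall>s\<in>T. (th1 has_real_derivative dth1 s) (at s)"
    and "\<forall>s\<in>T. (th2 has_real_derivative dth2 s) (at s)"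
    and "(dth1 has_real_derivative ddth1) (at t)"
    and "(dth2 has_real_derivative ddth2) (at t)"
  shows "let a = (th1 t - th2 t) / 2; b = (th1 t + th2 t) / 2;
             p = Polygamma 1 a; q = Polygamma 1 b; r = Polygamma 1 (th1 t);
             s = Polygamma 2 a; u = Polygamma 2 b; v = Polygamma 2 (th1 t);
             G = p * q - r * (p + q);
             dth = (\<lambda>i::nat. if i = 1 then dth1 t else dth2 t)
         in (ddth1 + (\<Sum>i\<in>{1,2}. \<Sum>j\<in>{1,2}. christ2 1 i j (th1 t) (th2 t) * dth i * dth j)
               = ddth1 - (q * (4 * v - s) + p * (4 * v - u)) / (8 * G) * (dth1 t)\<^sup>2
                 + (u * p - s * q) / (4 * G) * dth1 t * dth2 t
                 + (s * q + u * p) / (8 * G) * (dth2 t)\<^sup>2)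
          \<and> (ddth2 + (\<Sum>i\<in>{1,2}. \<Sum>j\<in>{1,2}. christ2 2 i j (th1 t) (th2 t) * dth i * dth j)
               = ddth2 + (q * (4 * v - s) / (8 * G) + (s - u) * r / (4 * G)
                          + (u - 4 * v) * p / (8 * G)) * (dth1 t)\<^sup>2
                 + (s * (q - 2 * r) + u * (p - 2 * r)) / (4 * G) * dth1 t * dth2 t
                 + (s * (2 * r - q) + u * (p - 2 * r)) / (8 * G) * (dth2 t)\<^sup>2)"
  proof -
  have th: "(th1 t, th2 t) \<in> Theta" using assms(2,3) by auto
  show ?thesis by (rule geo_final[OF th])
qed

end
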